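(* Let $\mathbb S$ be the Sorgenfrey line (the reals with topology generated by intervals $[a,b)$). Then every function from $\mathbb S$ to a metric space is weakly separated, and the function $\chi_{\mathbb Q}\colon\mathbb S\to\mathbb R$ is weakly separated but not Borel 1.
   Context: For a topological space $X$ and metric space $(Y,d)$, a neighborhood assignment is a family $\{V_x\}_{x\in X}$ of open subsets of $X$ with $x\in V_x$. $f\colon X\to Y$ is weakly separated if for every $\varepsilon>0$ there is a neighborhood assignment $\{V_x\}_{x\in X}$ such that for all $x,y\in X$, $(x,y)\in V_y\times V_x$ implies $d(f(x),f(y))<\varepsilon$; Borel 1 if $f^{-1}(V)$ is $F_\sigma$ in $X$ for every open $V\subseteq Y$. $\chi_{\mathbb Q}$ is the characteristic function of the rationals. *)

theory Defs
  imports "HOL-Analysis.Analysis"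
begin

definition Sorgenfrey :: "real topology" where
  "Sorgenfrey = topology_generated_by {{a..<b} | a b. a < b}"

definition nbhd_assignment :: "'a topology \<Rightarrow> ('a \<Rightarrow> 'a set) \<Rightarrow> bool" where
  "nbhd_assignment X V \<longleftrightarrow> (\<forall>x\<in>topspace X. openin X (V x) \<and> x \<in> V x)"

definition weakly_separated :: "'a topology \<Rightarrow> ('a \<Rightarrow> 'b::metric_space) \<Rightarrow> bool" where
  "weakly_separated X f \<longleftrightarrow>
     (\<forall>\<epsilon>>0. \<exists>V. nbhd_assignment X V \<and>
        (\<forall>x\<in>topspace X. \<forall>y\<in>topspace X. x \<in> V y \<and> y \<in> V x \<longrightarrow> dist (f x) (f y) < \<epsilon>))"

definition borel1 :: "'a topology \<Rightarrow> ('a \<Rightarrow> 'b::metric_space) \<Rightarrow> bool" where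
  "borel1 X f \<longleftrightarrow> (\<forall>V. open V \<longrightarrow> fsigma_in X {x \<in> topspace X. f x \<in> V})"

end

theory Submission
  imports Defs
begin

lemma sorg_topspace: "topspace Sorgenfrey = UNIV"
proof -
  have "x \<in> \<Union>{{a..<b} | a b. a < b}" for x :: real
  proof (rule UnionI[of "{x..<x+1}"])
    show "{x..<x+1} \<in> {{a..<b} | a b. a < b}"
      by (rule CollectI, rule exI[of _ x], rule exI[of _ "x+1"]) simp
  qed auto
  then show ?thesis unfolding Sorgenfrey_def by auto
qed

lemma sorg_open_basis: "a < b \<Longrightarrow> openin Sorgenfrey {a..<b}"
  unfolding Sorgenfrey_def by (rule topology_generated_by_Basis) auto

lemma sorg_open_gen:
  assumes "generate_topology_on {{a..<b} | a b::real. a < b} U"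
  shows "\<forall>x\<in>U. \<exists>d>0. {x..<x+d} \<subseteq> U"
  using assms
proof (induction rule: generate_topology_on.induct)
  case Empty then show ?case by auto
next
  case (Int a b)
  show ?case
  proof
    fix x assume "x \<in> a \<inter> b"
    then obtain d1 d2 where "d1>0" "{x..<x+d1} \<subseteq> a" "d2 > 0" "{x..<x+d2} \<subseteq> b"
      using Int.IH by blast
    moreover have "{x..<x+min d1 d2} \<subseteq> {x..<x+d1} \<inter> {x..<x+d2}" by auto
    ultimately have "{x..<x+min d1 d2} \<subseteq> a \<inter> b" by (meson Int_mono subset_trans)
    then show "\<exists>d>0. {x..<x+d} \<subseteq> a \<inter> b"
      using \<open>d1>0\<close> \<open>d2>0\<close> by (intro exI[of _ "min d1 d2"] conjI) simp_all
  qed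
next
  case (UN K)
  show ?case
  proof
    fix x assume "x \<in> \<Union>K"
    then obtain k where "k \<in> K" "x \<in> k" by auto
    then obtain d where "d>0" "{x..<x+d} \<subseteq> k" using UN.IH by blast
    then show "\<exists>d>0. {x..<x+d} \<subseteq> \<Union>K" using \<open>k \<in> K\<close> by blast
  qed
next
  case (Basis s)
  then obtain a b where s: "s = {a..<b}" "a < b" by auto
  show ?case
  proof
    fix x assume "x \<in> s"
    then show "\<exists>d>0. {x..<x+d} \<subseteq> s" using s
      by (intro exI[of _ "b - x"]) auto
  qed
qed

lemma sorg_open: "openin Sorgenfrey U \<Longrightarrow> x \<in> U \<Longrightarrow> \<exists>d>0. {x..<x+d} \<subseteq> U"
  using sorg_open_gen unfolding Sorgenfrey_def openin_topology_generated_by_iff by blast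

lemma all_ws: "weakly_separated Sorgenfrey (f :: real \<Rightarrow> 'b::metric_space)"
  unfolding weakly_separated_def nbhd_assignment_def
proof (intro allI impI)
  fix e :: real assume "e > 0"
  show "\<exists>V. (\<forall>x\<in>topspace Sorgenfrey. openin Sorgenfrey (V x) \<and> x \<in> V x) \<and>
        (\<forall>x\<in>topspace Sorgenfrey. \<forall>y\<in>topspace Sorgenfrey. x \<in> V y \<and> y \<in> V x \<longrightarrow> dist (f x) (f y) < e)"
    by (rule exI[of _ "\<lambda>x. {x..<x+1}"]) (auto simp: sorg_open_basis \<open>e > 0\<close>)
qed

lemma step:
  assumes "a < b" "closedin Sorgenfrey F" "F \<inter> \<rat> = {}"
  shows "\<exists>p. a \<le> fst p \<and> fst p < snd p \<and> snd p < b \<and> {fst p..<snd p} \<inter> F = {} \<and> q \<notin> {fst p..<snd p}"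
proof -
  obtain r0 where r0: "r0 \<in> \<rat>" "a < r0" "r0 < b" using Rats_dense_in_real[OF assms(1)] by auto
  obtain r1 where r1: "r1 \<in> \<rat>" "r0 < r1" "r1 < b" using Rats_dense_in_real[OF r0(3)] by auto
  obtain r where r: "r \<in> \<rat>" "a < r" "r < b" "r \<noteq> q"
    using r0 r1 by (cases "r0 = q") auto
  have "openin Sorgenfrey (UNIV - F)" using assms(2) by (simp add: closedin_def sorg_topspace)
  moreover have "r \<in> UNIV - F" using r assms(3) by auto
  ultimately obtain d where d: "d > 0" "{r..<r+d} \<subseteq> UNIV - F" using sorg_open by blast
  define c where "c = min (r+d) (min ((r+b)/2) (if q > r then q else b))"
  have "r < c" unfolding c_def using d r by auto
  moreover have "c < b"
  proof -
    have "c \<le> (r+b)/2" unfolding c_def by (meson min.cobounded1 min.cobounded2 order_trans)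
    moreover have "(r+b)/2 < b" using r by simp
    ultimately show "c < b" by (rule le_less_trans)
  qed
  moreover have "{r..<c} \<inter> F = {}" using d unfolding c_def by auto
  moreover have "q \<notin> {r..<c}" using r unfolding c_def by auto
  ultimately show ?thesis using r by (intro exI[of _ "(r,c)"]) auto
qed

lemma not_b1: "\<not> borel1 Sorgenfrey (indicator \<rat> :: real \<Rightarrow> real)"
proof
  assume "borel1 Sorgenfrey (indicator \<rat> :: real \<Rightarrow> real)"
  then have "fsigma_in Sorgenfrey {x \<in> topspace Sorgenfrey. (indicator \<rat> x :: real) \<in> {..<1/2}}"
    unfolding borel1_def using open_lessThan[of "1/2::real"] by blast
  moreover have "{x \<in> topspace Sorgenfrey. (indicator \<rat> x :: real) \<in> {..<1/2}} = - \<rat>"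
    by (auto simp: sorg_topspace indicator_def)
  ultimately have "fsigma_in Sorgenfrey (- \<rat>)" by simp
  then obtain C where C0: "\<forall>n. closedin Sorgenfrey (C n)" "\<forall>n. C n \<subseteq> C (Suc n)" "\<Union>(range C) = - \<rat>"
    unfolding fsigma_in_ascending by (elim exE conjE) blast
  have C: "\<And>n. closedin Sorgenfrey (C n)" "\<Union>(range C) = - \<rat>" using C0 by auto
  have CQ: "C n \<inter> \<rat> = {}" for n using C(2) by auto
  define q where "q = from_nat_into (\<rat> :: real set)"
  define P where "P = (\<lambda>n (p::real\<times>real) p'. fst p \<le> fst p' \<and> fst p' < snd p' \<and> snd p' < snd p
      \<and> {fst p'..<snd p'} \<inter> C n = {} \<and> q n \<notin> {fst p'..<snd p'})"
  define nx where "nx = (\<lambda>n p. SOME p'. P n p p')"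
  have nxP: "fst p < snd p \<Longrightarrow> P n p (nx n p)" for n p
    unfolding nx_def P_def
    by (rule someI_ex) (rule step[OF _ C(1) CQ], simp)
  define s where "s = rec_nat (0::real, 1::real) nx"
  have s0: "s 0 = (0,1)" unfolding s_def by simp
  have sS: "s (Suc n) = nx n (s n)" for n unfolding s_def by simp
  have lt: "fst (s n) < snd (s n)" for n
  proof (induction n)
    case 0 then show ?case by (simp add: s0)
  next
    case (Suc n) then show ?case using nxP[of "s n" n] by (simp add: sS P_def)
  qed
  have PS: "P n (s n) (s (Suc n))" for n using nxP[OF lt] sS by simp
  define a where "a = (\<lambda>n. fst (s n))"
  define b where "b = (\<lambda>n. snd (s n))"
  have am: "incseq a" unfolding a_def
    by (rule incseq_SucI) (use PS in \<open>auto simp: P_def\<close>)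
  have bm: "decseq b" unfolding b_def
    by (rule decseq_SucI) (use PS in \<open>auto simp: P_def less_imp_le\<close>)
  have ab: "a k \<le> b m" for k m
  proof (cases "k \<le> m")
    case True then have "a k \<le> a m" using am by (simp add: incseq_def)
    also have "... \<le> b m" using lt[of m] unfolding a_def b_def by simp
    finally show ?thesis .
  next
    case False then have "b k \<le> b m" using bm by (simp add: decseq_def)
    moreover have "a k \<le> b k" using lt[of k] unfolding a_def b_def by simp
    ultimately show ?thesis by simp
  qed
  define x where "x = (SUP k. a k)"
  have bdd: "bdd_above (range a)" by (rule bdd_aboveI2[where M="b 0"]) (rule ab)
  have ax: "a k \<le> x" for k unfolding x_def by (rule cSUP_upper[OF _ bdd]) auto
  have xb: "x \<le> b m" for m unfolding x_def by (rule cSUP_least) (auto simp: ab)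
  have xin: "x \<in> {a (Suc n)..<b (Suc n)}" for n
  proof -
    have "x \<le> b (Suc (Suc n))" by (rule xb)
    also have "... < b (Suc n)" using PS[of "Suc n"] unfolding P_def b_def by simp
    finally show ?thesis using ax[of "Suc n"] by simp
  qed
  have xC: "x \<notin> C n" for n using xin[of n] PS[of n] unfolding P_def a_def b_def by auto
  have xq: "x \<noteq> q n" for n using xin[of n] PS[of n] unfolding P_def a_def b_def by auto
  show False
  proof (cases "x \<in> \<rat>")
    case True
    then obtain n where "q n = x" unfolding q_def
      using from_nat_into_surj[OF countable_rat] by blast
    then show False using xq by auto
  next
    case False
    then have "x \<in> \<Union>(range C)" using C(2) by auto
    then show False using xC by auto
  qed
qed

theorem mainTheorem6:
  shows "(\<forall>f :: real \<Rightarrow> 'b::metric_space. weakly_separated Sorgenfrey f)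
     \<and> weakly_separated Sorgenfrey (indicator \<rat> :: real \<Rightarrow> real)
     \<and> \<not> borel1 Sorgenfrey (indicator \<rat> :: real \<Rightarrow> real)"
  by (intro conjI allI all_ws not_b1)

end
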